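(* Suppose $f$ satisfies the separation property. Let $x\in\widetilde X$ with itinerary $\theta$, $t\geqslant0$, $n\geqslant 1$ and $(i_1,\dots,i_n)\in\{1,\dots,N\}^n$. Then $\theta_t\theta_{t+1}\dots\theta_{t+n-1}=i_1\dots i_n$ if and only if $f^{t+n}(x)\in A_{i_1\dots i_n}$.
   Context: Let $(X,d)$ be a compact metric space, $X_1,\dots,X_N$ ($N\geqslant 2$) non-empty pairwise disjoint open subsets with $X=\bigcup_i\overline{X_i}$, $\Delta:=\{x\in\overline{X_i}\cap\overline{X_j}:i\neq j\}$, and $f:X\to X$ a map such that each $f|_{X_i}$ admits a continuous extension $f_i:\overline{X_i}\to X$. Separation property: each $f_i$ injective and $f_i(\overline{X_i})\cap f_j(\overline{X_j})=\emptyset$ for $i\neq j$. $\widetilde X:=\bigcap_{n\geqslant 0}f^{-n}(X\setminus\Delta)$; the itinerary of $x\in\widetilde X$ is $\theta$ with $\theta_t=i$ iff $f^t(x)\in X_i$. For $A\subset X$ let $F_i(A):=\overline{f(A\cap X_i)}$ and $A_{i_1\dots i_n}:=F_{i_n}\circ\dots\circ F_{i_1}(X)$. *)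

theory Defs
  imports "HOL-Analysis.Analysis"
begin

definition setting ::
  "'a::metric_space set \<Rightarrow> nat \<Rightarrow> (nat \<Rightarrow> 'a set) \<Rightarrow> ('a \<Rightarrow> 'a) \<Rightarrow> (nat \<Rightarrow> 'a \<Rightarrow> 'a) \<Rightarrow> bool" where
  "setting X N Xs f fs \<longleftrightarrow>
     compact X \<and> N \<ge> 2 \<and>
     (\<forall>i\<in>{1..N}. Xs i \<noteq> {} \<and> openin (top_of_set X) (Xs i)) \<and>
     (\<forall>i\<in>{1..N}. \<forall>j\<in>{1..N}. i \<noteq> j \<longrightarrow> Xs i \<inter> Xs j = {}) \<and>
     X = (\<Union>i\<in>{1..N}. closure (Xs i)) \<and>
     f ` X \<subseteq> X \<and>
     (\<forall>i\<in>{1..N}. continuous_on (closure (Xs i)) (fs i) \<and>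
                  fs i ` closure (Xs i) \<subseteq> X \<and>
                  (\<forall>x\<in>Xs i. fs i x = f x))"

definition separation ::
  "nat \<Rightarrow> (nat \<Rightarrow> 'a::metric_space set) \<Rightarrow> (nat \<Rightarrow> 'a \<Rightarrow> 'a) \<Rightarrow> bool" where
  "separation N Xs fs \<longleftrightarrow>
     (\<forall>i\<in>{1..N}. inj_on (fs i) (closure (Xs i))) \<and>
     (\<forall>i\<in>{1..N}. \<forall>j\<in>{1..N}. i \<noteq> j \<longrightarrow>
        fs i ` closure (Xs i) \<inter> fs j ` closure (Xs j) = {})"

definition Delta :: "nat \<Rightarrow> (nat \<Rightarrow> 'a::metric_space set) \<Rightarrow> 'a set" where
  "Delta N Xs = {x. \<exists>i\<in>{1..N}. \<exists>j\<in>{1..N}. i \<noteq> j \<and> x \<in> closure (Xs i) \<inter> closure (Xs j)}"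

definition Xtilde :: "'a::metric_space set \<Rightarrow> nat \<Rightarrow> (nat \<Rightarrow> 'a set) \<Rightarrow> ('a \<Rightarrow> 'a) \<Rightarrow> 'a set" where
  "Xtilde X N Xs f = {x \<in> X. \<forall>n. (f ^^ n) x \<in> X - Delta N Xs}"

definition itinerary :: "nat \<Rightarrow> (nat \<Rightarrow> 'a set) \<Rightarrow> ('a \<Rightarrow> 'a) \<Rightarrow> 'a \<Rightarrow> (nat \<Rightarrow> nat) \<Rightarrow> bool" where
  "itinerary N Xs f x \<theta> \<longleftrightarrow>
     (\<forall>t. \<theta> t \<in> {1..N} \<and> (\<forall>i\<in>{1..N}. \<theta> t = i \<longleftrightarrow> (f ^^ t) x \<in> Xs i))"

definition Fmap :: "('a::metric_space \<Rightarrow> 'a) \<Rightarrow> (nat \<Rightarrow> 'a set) \<Rightarrow> nat \<Rightarrow> 'a set \<Rightarrow> 'a set" where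
  "Fmap f Xs i A = closure (f ` (A \<inter> Xs i))"

text \<open>A_{i_1...i_n} = F_{i_n} o ... o F_{i_1} (X); the word is a list [i_1,...,i_n].\<close>
definition Aword :: "'a::metric_space set \<Rightarrow> ('a \<Rightarrow> 'a) \<Rightarrow> (nat \<Rightarrow> 'a set) \<Rightarrow> nat list \<Rightarrow> 'a set" where
  "Aword X f Xs ws = foldl (\<lambda>A i. Fmap f Xs i A) X ws"

end

theory Submission
  imports Defs
begin

lemma aux_basic:
  assumes S: "setting X N Xs f fs" and i: "i \<in> {1..N}"
  shows "closed X" "Xs i \<subseteq> X" "closure (Xs i) \<subseteq> X" "compact (closure (Xs i))"
proof -
  from S have cX: "compact X" unfolding setting_def by blast
  show cl: "closed X" using cX compact_imp_closed by blast
  from S i have "openin (top_of_set X) (Xs i)" unfolding setting_def by blast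
  then show sub: "Xs i \<subseteq> X" using openin_subset by fastforce
  show sub2: "closure (Xs i) \<subseteq> X" using closure_minimal[OF sub cl] .
  have "compact (X \<inter> closure (Xs i))" using compact_Int_closed[OF cX] by simp
  then show "compact (closure (Xs i))" using sub2 by (simp add: Int_absorb1)
qed

lemma aux_img:
  assumes S: "setting X N Xs f fs" and i: "i \<in> {1..N}"
  shows "closure (f ` (A \<inter> Xs i)) = fs i ` closure (A \<inter> Xs i)"
proof -
  from S i have cont: "continuous_on (closure (Xs i)) (fs i)"
    and eq: "\<forall>x\<in>Xs i. fs i x = f x" unfolding setting_def by blast+
  have e: "f ` (A \<inter> Xs i) = fs i ` (A \<inter> Xs i)" using eq by (auto simp: image_def)
  have sub: "closure (A \<inter> Xs i) \<subseteq> closure (Xs i)" by (simp add: closure_mono)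
  have cc: "compact (closure (A \<inter> Xs i))"
    using aux_basic(4)[OF S i] sub compact_Int_closed[of "closure (Xs i)" "closure (A \<inter> Xs i)"]
    by (simp add: Int_absorb1)
  have cont2: "continuous_on (closure (A \<inter> Xs i)) (fs i)" using continuous_on_subset[OF cont sub] .
  have "compact (fs i ` closure (A \<inter> Xs i))" using compact_continuous_image[OF cont2 cc] .
  then have clo: "closed (fs i ` closure (A \<inter> Xs i))" by (rule compact_imp_closed)
  have "closure (f ` (A \<inter> Xs i)) \<subseteq> fs i ` closure (A \<inter> Xs i)"
    unfolding e by (rule closure_minimal[OF _ clo]) (intro image_mono closure_subset)
  moreover have "fs i ` closure (A \<inter> Xs i) \<subseteq> closure (f ` (A \<inter> Xs i))"
    unfolding e by (rule image_closure_subset[OF cont2 closed_closure closure_subset])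
  ultimately show ?thesis by blast
qed

lemma aux_closed:
  assumes S: "setting X N Xs f fs" and ws: "set ws \<subseteq> {1..N}"
  shows "closed (Aword X f Xs ws) \<and> Aword X f Xs ws \<subseteq> X"
  using ws
proof (induction ws rule: rev_induct)
  case Nil
  have "compact X" using S unfolding setting_def by blast
  then show ?case by (simp add: Aword_def compact_imp_closed)
next
  case (snoc i ws)
  have i: "i \<in> {1..N}" using snoc.prems by auto
  have "Aword X f Xs (ws @ [i]) = closure (f ` (Aword X f Xs ws \<inter> Xs i))"
    by (simp add: Aword_def Fmap_def)
  also have "\<dots> = fs i ` closure (Aword X f Xs ws \<inter> Xs i)" using aux_img[OF S i] .
  finally have e: "Aword X f Xs (ws @ [i]) = fs i ` closure (Aword X f Xs ws \<inter> Xs i)" .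
  have "fs i ` closure (Xs i) \<subseteq> X" using S i unfolding setting_def by blast
  moreover have "closure (Aword X f Xs ws \<inter> Xs i) \<subseteq> closure (Xs i)" by (simp add: closure_mono)
  ultimately have "Aword X f Xs (ws @ [i]) \<subseteq> X" unfolding e by blast
  moreover have "closed (Aword X f Xs (ws @ [i]))" by (simp add: Aword_def Fmap_def)
  ultimately show ?case by blast
qed

lemma main:
  assumes S: "setting X N Xs f fs" and sep: "separation N Xs fs"
    and xt: "x \<in> Xtilde X N Xs f" and it: "itinerary N Xs f x \<theta>"
    and ws: "set ws \<subseteq> {1..N}"
  shows "map \<theta> [t..<t+length ws] = ws \<longleftrightarrow> (f ^^ (t + length ws)) x \<in> Aword X f Xs ws"
  using ws
proof (induction ws rule: rev_induct)
  case Nil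
  then show ?case using xt by (simp add: Xtilde_def Aword_def)
next
  case (snoc i ws)
  have i: "i \<in> {1..N}" and wsN: "set ws \<subseteq> {1..N}" using snoc.prems by auto
  note IH = snoc.IH[OF wsN]
  define m where "m = length ws"
  define y where "y = (f ^^ (t + m)) x"
  define A where "A = Aword X f Xs ws"
  have fy: "(f ^^ (t + length (ws @ [i]))) x = f y" by (simp add: y_def m_def)
  have mapeq: "map \<theta> [t..<t + length (ws @ [i])] = map \<theta> [t..<t+m] @ [\<theta> (t+m)]"
    by (simp add: m_def)
  have Aeq: "Aword X f Xs (ws @ [i]) = closure (f ` (A \<inter> Xs i))"
    by (simp add: Aword_def Fmap_def A_def)
  have IH': "map \<theta> [t..<t+m] = ws \<longleftrightarrow> y \<in> A" using IH by (simp add: m_def y_def A_def)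
  have thN: "\<theta> (t+m) \<in> {1..N}" and thy: "y \<in> Xs (\<theta> (t+m))"
    using it unfolding itinerary_def y_def by blast+
  have Acl: "closed A" using aux_closed[OF S wsN] by (simp add: A_def)
  show ?case
  proof
    assume h: "map \<theta> [t..<t + length (ws @ [i])] = ws @ [i]"
    then have "map \<theta> [t..<t+m] = ws" "\<theta> (t+m) = i" using mapeq by auto
    then have "y \<in> A" "y \<in> Xs i" using IH' thy by auto
    then have "f y \<in> f ` (A \<inter> Xs i)" by simp
    then show "(f ^^ (t + length (ws @ [i]))) x \<in> Aword X f Xs (ws @ [i])"
      unfolding fy Aeq by (rule closure_subset[THEN subsetD])
  next
    assume h: "(f ^^ (t + length (ws @ [i]))) x \<in> Aword X f Xs (ws @ [i])"
    then have "f y \<in> fs i ` closure (A \<inter> Xs i)" unfolding fy Aeq aux_img[OF S i] .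
    then obtain z where z: "z \<in> closure (A \<inter> Xs i)" and fz: "f y = fs i z" by blast
    have zc: "z \<in> closure (Xs i)" using z closure_mono[of "A \<inter> Xs i" "Xs i"] by (meson Int_lower2 subsetD)
    have "closure (A \<inter> Xs i) \<subseteq> A" using Acl by (simp add: closure_minimal)
    then have zA: "z \<in> A" using z by (rule subsetD)
    let ?j = "\<theta> (t+m)"
    have "fs ?j y = f y" using S thN thy unfolding setting_def by blast
    moreover have yc: "y \<in> closure (Xs ?j)" using thy closure_subset by blast
    ultimately have "f y \<in> fs ?j ` closure (Xs ?j)" by (metis imageI)
    moreover have "f y \<in> fs i ` closure (Xs i)" using fz zc by blast
    ultimately have ji: "?j = i" using sep thN i unfolding separation_def by (meson disjoint_iff)
    have "inj_on (fs i) (closure (Xs i))" using sep i unfolding separation_def by blast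
    moreover have "fs i y = fs i z" using fz \<open>fs ?j y = f y\<close> ji by simp
    ultimately have "y = z" using yc zc ji by (metis inj_onD)
    then have "y \<in> A" using zA by simp
    then show "map \<theta> [t..<t + length (ws @ [i])] = ws @ [i]" using IH' mapeq ji by simp
  qed
qed

theorem corollary1:
  fixes X :: "'a::metric_space set" and N :: nat and Xs :: "nat \<Rightarrow> 'a set"
    and f :: "'a \<Rightarrow> 'a" and fs :: "nat \<Rightarrow> 'a \<Rightarrow> 'a"
    and x :: 'a and \<theta> :: "nat \<Rightarrow> nat" and t n :: nat and ws :: "nat list"
  assumes "setting X N Xs f fs"
    and "separation N Xs fs"
    and "x \<in> Xtilde X N Xs f"
    and "itinerary N Xs f x \<theta>"
    and "n \<ge> 1" and "length ws = n" and "set ws \<subseteq> {1..N}"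
  shows "map \<theta> [t..<t+n] = ws \<longleftrightarrow> (f ^^ (t + n)) x \<in> Aword X f Xs ws"
  using main[OF assms(1-4) assms(7), of t] assms(6) by simp

end
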